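(* Let $(R,\mathfrak{m})$ be a Noetherian local ring and let $I$ be an ideal of $R$. Let $x_1,\ldots,x_s,y$ be a minimal generating set of $I$ and $J=(x_1,\ldots,x_s)$. Then, for each integer $n\geq 2$, there is a short exact sequence of $R$-modules $$0\to \frac{H_1(x_1t,\ldots,x_st;\mathbf{R}(I))_n}{yt\,H_1(x_1t,\ldots,x_st;\mathbf{R}(I))_{n-1}}\longrightarrow H_1(x_1t,\ldots,x_st,yt;\mathbf{R}(I))_n\stackrel{\sigma_n}{\longrightarrow}\frac{JI^{n-1}:y^n}{JI^{n-2}:y^{n-1}}\to 0,$$ where $\sigma_n$ sends the homology class of a cycle $(w_1t^{n-1},\ldots,w_st^{n-1},w_{s+1}t^{n-1})$, $w_i\in I^{n-1}$, to the class of $a\in (JI^{n-1}:y^n)$, where $a\in R$ is such that $w_{s+1}=ay^{n-1}+b$ for some $b\in JI^{n-2}$.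
   Context: $\mathbf{R}(I)=\bigoplus_{n\geq0}I^nt^n$ is the Rees algebra; $I^0=R$. For elements $z_1,\ldots,z_m$ of degree one of a graded ring $U=\bigoplus_n U_n$ (here $U=\mathbf{R}(I)$), $H_1(z_1,\ldots,z_m;U)_n$ is the first homology of the graded Koszul complex in degree $n$: $\wedge_2(R^m)\otimes U_{n-2}\xrightarrow{\partial_2}\wedge_1(R^m)\otimes U_{n-1}\xrightarrow{\partial_1}U_n$, with $\partial_2(e_i\wedge e_j\otimes u)=e_j\otimes z_iu-e_i\otimes z_ju$ and $\partial_1(e_i\otimes v)=z_iv$, where $e_1,\ldots,e_m$ is the standard basis of $R^m$. Thus cycles in degree $n$ are $m$-tuples in $U_{n-1}^m$. *)

theory Defs
  imports Main
begin

definition r_ideal :: "'a::comm_ring_1 set \<Rightarrow> bool" where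
  "r_ideal I \<longleftrightarrow> 0 \<in> I \<and> (\<forall>a\<in>I. \<forall>b\<in>I. a + b \<in> I) \<and> (\<forall>r. \<forall>a\<in>I. r * a \<in> I)"

definition ideal_span :: "'a::comm_ring_1 set \<Rightarrow> 'a set" where
  "ideal_span S = \<Inter>{I. r_ideal I \<and> S \<subseteq> I}"

definition ideal_mult :: "'a::comm_ring_1 set \<Rightarrow> 'a set \<Rightarrow> 'a set" where
  "ideal_mult I J = ideal_span {a * b | a b. a \<in> I \<and> b \<in> J}"

fun ideal_pow :: "'a::comm_ring_1 set \<Rightarrow> nat \<Rightarrow> 'a set" where
  "ideal_pow I 0 = UNIV"
| "ideal_pow I (Suc k) = ideal_mult I (ideal_pow I k)"

definition colon :: "'a::comm_ring_1 set \<Rightarrow> 'a \<Rightarrow> 'a set" where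
  "colon A b = {r. r * b \<in> A}"

definition maximal_ideal :: "'a::comm_ring_1 set \<Rightarrow> bool" where
  "maximal_ideal M \<longleftrightarrow> r_ideal M \<and> M \<noteq> UNIV \<and>
     (\<forall>J. r_ideal J \<and> M \<subseteq> J \<longrightarrow> J = M \<or> J = UNIV)"

definition noetherian_ring :: "'a::comm_ring_1 itself \<Rightarrow> bool" where
  "noetherian_ring _ \<longleftrightarrow> (\<forall>I::'a set. r_ideal I \<longrightarrow> (\<exists>F. finite F \<and> I = ideal_span F))"

definition local_ring :: "'a::comm_ring_1 itself \<Rightarrow> bool" where
  "local_ring _ \<longleftrightarrow> (\<exists>!M::'a set. maximal_ideal M)"

definition min_gen_set :: "'a::comm_ring_1 set \<Rightarrow> (nat \<Rightarrow> 'a) \<Rightarrow> nat \<Rightarrow> bool" where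
  "min_gen_set I z m \<longleftrightarrow> I = ideal_span (z ` {..<m}) \<and>
     (\<forall>F. finite F \<and> ideal_span F = I \<longrightarrow> m \<le> card F)"

(* Degree-k part of the Rees algebra R(I), identified with I^k (U_{-1} = 0 handled below). *)

(* Koszul 1-cycles in degree k of z_0 t,...,z_{m-1} t on R(I): m-tuples in U_{k-1}
   (represented as functions nat => 'a vanishing from m on) killed by d_1. *)
definition kcyc :: "'a::comm_ring_1 set \<Rightarrow> (nat \<Rightarrow> 'a) \<Rightarrow> nat \<Rightarrow> nat \<Rightarrow> (nat \<Rightarrow> 'a) set" where
  "kcyc I z m k = {v. (\<forall>i<m. v i \<in> (if k = 0 then {0} else ideal_pow I (k - 1))) \<and>
                      (\<forall>i\<ge>m. v i = 0) \<and> (\<Sum>i<m. z i * v i) = 0}"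

(* Koszul 1-boundaries in degree k: image of d_2 on wedge_2(R^m) \<otimes> U_{k-2}, where
   d_2(e_i \<and> e_j \<otimes> u) = e_j \<otimes> z_i u - e_i \<otimes> z_j u;  U_{k-2} = 0 when k < 2. *)
definition kbd :: "'a::comm_ring_1 set \<Rightarrow> (nat \<Rightarrow> 'a) \<Rightarrow> nat \<Rightarrow> nat \<Rightarrow> (nat \<Rightarrow> 'a) set" where
  "kbd I z m k = (if k < 2 then {\<lambda>_. 0} else
     {v. \<exists>u. (\<forall>i j. u i j \<in> ideal_pow I (k - 2)) \<and>
          v = (\<lambda>l. if l < m then (\<Sum>i<l. z i * u i l) - (\<Sum>j\<in>{l<..<m}. z j * u l j) else 0)})"

(* sigma-relation: a represents sigma_n of the cycle w (last coordinate index s) when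
   w_s = a y^{n-1} + b with b \<in> J I^{n-2} *)
definition sigma_rep :: "'a::comm_ring_1 set \<Rightarrow> 'a set \<Rightarrow> 'a \<Rightarrow> nat \<Rightarrow> nat \<Rightarrow> (nat \<Rightarrow> 'a) \<Rightarrow> 'a \<Rightarrow> bool" where
  "sigma_rep I J y s n w a \<longleftrightarrow>
     (\<exists>b \<in> ideal_mult J (ideal_pow I (n - 2)). w s = a * y ^ (n - 1) + b)"

end

theory Submission imports Defs begin

lemma id_neg: "r_ideal I \<Longrightarrow> a \<in> I \<Longrightarrow> - a \<in> I"
  unfolding r_ideal_def by (metis mult_minus1)
lemma id_add: "r_ideal I \<Longrightarrow> a \<in> I \<Longrightarrow> b \<in> I \<Longrightarrow> a + b \<in> I"
  unfolding r_ideal_def by blast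
lemma id_diff: "r_ideal I \<Longrightarrow> a \<in> I \<Longrightarrow> b \<in> I \<Longrightarrow> a - b \<in> I"
  using id_add id_neg by (metis diff_conv_add_uminus)
lemma id_multL: "r_ideal I \<Longrightarrow> a \<in> I \<Longrightarrow> r * a \<in> I"
  unfolding r_ideal_def by blast
lemma id_multR: "r_ideal I \<Longrightarrow> a \<in> I \<Longrightarrow> a * r \<in> I"
  unfolding r_ideal_def by (metis mult.commute)
lemma id_zero: "r_ideal I \<Longrightarrow> 0 \<in> I"
  unfolding r_ideal_def by blast
lemma id_sum: "r_ideal I \<Longrightarrow> (\<And>i. i \<in> A \<Longrightarrow> f i \<in> I) \<Longrightarrow> sum f A \<in> I"
proof (induction A rule: infinite_finite_induct)
  case (infinite A) then show ?case by (simp add: id_zero)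
next
  case empty then show ?case by (simp add: id_zero)
next
  case (insert x F) then show ?case by (simp add: id_add)
qed

lemma span_ideal: "r_ideal (ideal_span S)"
  unfolding ideal_span_def r_ideal_def by blast
lemma span_sup: "S \<subseteq> ideal_span S"
  unfolding ideal_span_def by auto
lemma span_least: "r_ideal T \<Longrightarrow> S \<subseteq> T \<Longrightarrow> ideal_span S \<subseteq> T"
  unfolding ideal_span_def by auto
lemma span_char: "r_ideal T \<Longrightarrow> G \<subseteq> T \<Longrightarrow> (\<And>I'. r_ideal I' \<Longrightarrow> G \<subseteq> I' \<Longrightarrow> T \<subseteq> I') \<Longrightarrow> ideal_span G = T"
  unfolding ideal_span_def by (rule equalityI; (rule Inter_lower | rule Inter_greatest); auto)

lemma mult_ideal: "r_ideal (ideal_mult A B)"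
  unfolding ideal_mult_def by (rule span_ideal)
lemma mult_mem: "a \<in> A \<Longrightarrow> b \<in> B \<Longrightarrow> a * b \<in> ideal_mult A B"
  unfolding ideal_mult_def by (rule subsetD[OF span_sup]) blast
lemma univ_ideal: "r_ideal UNIV" unfolding r_ideal_def by auto
lemma pow_ideal: "r_ideal (ideal_pow I k)"
  by (cases k) (auto simp: univ_ideal mult_ideal)
lemma pow_mem: "y \<in> I \<Longrightarrow> y ^ k \<in> ideal_pow I k"
  by (induction k) (auto intro: mult_mem)

definition lin :: "(nat \<Rightarrow> 'a::comm_ring_1) \<Rightarrow> nat \<Rightarrow> 'a set \<Rightarrow> 'a set" where
  "lin f m K = {(\<Sum>i<m. f i * g i) | g. \<forall>i<m. g i \<in> K}"

lemma lin_mem: "(\<And>i. i < m \<Longrightarrow> g i \<in> K) \<Longrightarrow> (\<Sum>i<m. f i * g i) \<in> lin f m K"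
  unfolding lin_def by blast
lemma lin_E: "a \<in> lin f m K \<Longrightarrow> \<exists>g. (\<forall>i<m. g i \<in> K) \<and> a = (\<Sum>i<m. f i * g i)"
  unfolding lin_def mem_Collect_eq by metis

lemma lin_ideal: assumes K: "r_ideal K" shows "r_ideal (lin f m K)"
proof -
  have "0 \<in> lin f m K" using lin_mem[of m "\<lambda>_. 0" K f] id_zero[OF K] by simp
  moreover have "a + b \<in> lin f m K" if A: "a \<in> lin f m K" and B: "b \<in> lin f m K" for a b
  proof -
    obtain g where g: "\<forall>i<m. g i \<in> K" "a = (\<Sum>i<m. f i * g i)" using lin_E[OF A] by blast
    obtain h where h: "\<forall>i<m. h i \<in> K" "b = (\<Sum>i<m. f i * h i)" using lin_E[OF B] by blast
    have "a + b = (\<Sum>i<m. f i * (g i + h i))" by (simp add: g h distrib_left sum.distrib)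
    thus ?thesis using lin_mem[of m "\<lambda>i. g i + h i" K f] g h id_add[OF K] by simp
  qed
  moreover have "r * a \<in> lin f m K" if A: "a \<in> lin f m K" for a r
  proof -
    obtain g where g: "\<forall>i<m. g i \<in> K" "a = (\<Sum>i<m. f i * g i)" using lin_E[OF A] by blast
    have "r * a = (\<Sum>i<m. f i * (r * g i))" by (simp add: g sum_distrib_left mult.left_commute)
    thus ?thesis using lin_mem[of m "\<lambda>i. r * g i" K f] g id_multL[OF K] by simp
  qed
  ultimately show ?thesis unfolding r_ideal_def by blast
qed

lemma sum_delta_aux: "i < (m::nat) \<Longrightarrow> (\<Sum>j<m. f j * (if j = i then 1 else 0)) = (f i :: 'a::comm_ring_1)"
proof -
  assume "i < m"
  have "(\<Sum>j<m. f j * (if j = i then 1 else 0)) = (\<Sum>j<m. if j = i then f i else 0)"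
    by (rule sum.cong) auto
  also have "\<dots> = f i" using \<open>i < m\<close> by (subst sum.delta) auto
  finally show ?thesis .
qed

lemma span_fin: "ideal_span (f ` {..<m}) = lin f m UNIV"
proof (rule span_char)
  show "r_ideal (lin f m UNIV)" by (rule lin_ideal[OF univ_ideal])
  show "f ` {..<m} \<subseteq> lin f m UNIV"
  proof
    fix a assume "a \<in> f ` {..<m}"
    then obtain i where i: "i < m" "a = f i" by auto
    show "a \<in> lin f m UNIV" using lin_mem[of m "\<lambda>j. if j = i then 1 else 0" UNIV f] sum_delta_aux[OF i(1), of f] i by simp
  qed
  fix I' assume I': "r_ideal I'" "f ` {..<m} \<subseteq> I'"
  show "lin f m UNIV \<subseteq> I'"
  proof
    fix a assume "a \<in> lin f m UNIV"
    then obtain g where g: "a = (\<Sum>i<m. f i * g i)" using lin_E by blast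
    have "f i * g i \<in> I'" if "i < m" for i
    proof -
      have "f i \<in> I'" using I'(2) that by blast
      thus ?thesis by (rule id_multR[OF I'(1)])
    qed
    thus "a \<in> I'" unfolding g by (rule id_sum[OF I'(1)]) simp
  qed
qed

lemma mult_span: assumes K: "r_ideal K" shows "ideal_mult (ideal_span (f ` {..<m})) K = lin f m K"
  unfolding ideal_mult_def
proof (rule span_char)
  show "r_ideal (lin f m K)" by (rule lin_ideal[OF K])
  show "{a * b |a b. a \<in> ideal_span (f ` {..<m}) \<and> b \<in> K} \<subseteq> lin f m K"
  proof
    fix c assume "c \<in> {a * b |a b. a \<in> ideal_span (f ` {..<m}) \<and> b \<in> K}"
    then obtain a b where ab: "c = a * b" "a \<in> ideal_span (f ` {..<m})" "b \<in> K" by blast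
    have "a \<in> lin f m UNIV" using ab(2) span_fin by metis
    then obtain g where g: "a = (\<Sum>i<m. f i * g i)" using lin_E by blast
    have "c = (\<Sum>i<m. f i * g i) * b" using ab(1) g by simp
    also have "\<dots> = (\<Sum>i<m. f i * (g i * b))" by (simp add: sum_distrib_right mult.assoc)
    finally have c: "c = (\<Sum>i<m. f i * (g i * b))" .
    have "(\<Sum>i<m. f i * (g i * b)) \<in> lin f m K" by (rule lin_mem) (rule id_multL[OF K ab(3)])
    thus "c \<in> lin f m K" using c by simp
  qed
  fix I' assume I': "r_ideal I'" "{a * b |a b. a \<in> ideal_span (f ` {..<m}) \<and> b \<in> K} \<subseteq> I'"
  show "lin f m K \<subseteq> I'"
  proof
    fix c assume "c \<in> lin f m K"
    then obtain g where g: "\<forall>i<m. g i \<in> K" "c = (\<Sum>i<m. f i * g i)" using lin_E by blast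
    have "f i * g i \<in> I'" if "i < m" for i
    proof -
      have "f i \<in> f ` {..<m}" using that by simp
      hence "f i \<in> ideal_span (f ` {..<m})" by (rule subsetD[OF span_sup])
      moreover have "g i \<in> K" using g(1) that by blast
      ultimately have "f i * g i \<in> {a * b |a b. a \<in> ideal_span (f ` {..<m}) \<and> b \<in> K}" by blast
      thus ?thesis using I'(2) by blast
    qed
    thus "c \<in> I'" unfolding g(2) by (rule id_sum[OF I'(1)]) simp
  qed
qed

definition bd :: "(nat \<Rightarrow> 'a::comm_ring_1) \<Rightarrow> nat \<Rightarrow> (nat \<Rightarrow> nat \<Rightarrow> 'a) \<Rightarrow> nat \<Rightarrow> 'a" where
  "bd f m u = (\<lambda>l. if l < m then (\<Sum>i<l. f i * u i l) - (\<Sum>j\<in>{l<..<m}. f j * u l j) else 0)"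

lemma kbd_eq: "2 \<le> k \<Longrightarrow> kbd I f m k = {bd f m u | u. \<forall>i j. u i j \<in> ideal_pow I (k-2)}"
  unfolding kbd_def bd_def by (simp; blast)

lemma bd_cong: assumes "\<And>i j. j < m \<Longrightarrow> U i j = V i j" shows "bd f m U = bd f m V"
proof (rule ext)
  fix l
  show "bd f m U l = bd f m V l"
  proof (cases "l < m")
    case True
    have "(\<Sum>i<l. f i * U i l) = (\<Sum>i<l. f i * V i l)" using True assms by (intro sum.cong) auto
    moreover have "(\<Sum>j\<in>{l<..<m}. f j * U l j) = (\<Sum>j\<in>{l<..<m}. f j * V l j)" using assms by (intro sum.cong) auto
    ultimately show ?thesis unfolding bd_def by simp
  qed (simp add: bd_def)
qed

lemma bd_zero: "bd f m (\<lambda>_ _. 0) = (\<lambda>_. 0)"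
  unfolding bd_def by (rule ext) simp

lemma bdz:
  assumes zdef: "z = (\<lambda>i. if i < s then x i else y)"
  shows "bd z (Suc s) U l = (if l < s then bd x s U l - y * U l s
          else if l = s then (\<Sum>i<s. x i * U i s) else 0)"
proof -
  consider "l < s" | "l = s" | "s < l" by linarith
  then show ?thesis
  proof cases
    case 1
    have A: "(\<Sum>i<l. z i * U i l) = (\<Sum>i<l. x i * U i l)" using 1 by (intro sum.cong) (auto simp: zdef)
    have "{l<..<Suc s} = insert s {l<..<s}" using 1 by auto
    hence "(\<Sum>j\<in>{l<..<Suc s}. z j * U l j) = z s * U l s + (\<Sum>j\<in>{l<..<s}. z j * U l j)" by simp
    also have "(\<Sum>j\<in>{l<..<s}. z j * U l j) = (\<Sum>j\<in>{l<..<s}. x j * U l j)" by (intro sum.cong) (auto simp: zdef)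
    finally have B: "(\<Sum>j\<in>{l<..<Suc s}. z j * U l j) = y * U l s + (\<Sum>j\<in>{l<..<s}. x j * U l j)" by (simp add: zdef)
    show ?thesis using 1 unfolding bd_def A B by (simp add: algebra_simps)
  next
    case 2
    have A: "(\<Sum>i<s. z i * U i s) = (\<Sum>i<s. x i * U i s)" by (intro sum.cong) (auto simp: zdef)
    have "{s<..<Suc s} = {}" by auto
    thus ?thesis using 2 A unfolding bd_def by simp
  next
    case 3 thus ?thesis unfolding bd_def by simp
  qed
qed

lemma sumz:
  assumes zdef: "z = (\<lambda>i. if i < s then x i else y)"
  shows "(\<Sum>i<Suc s. z i * w i) = (\<Sum>i<s. x i * w i) + y * w s"
proof -
  have "(\<Sum>i<s. z i * w i) = (\<Sum>i<s. x i * w i)" by (intro sum.cong) (auto simp: zdef)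
  thus ?thesis by (simp add: zdef)
qed

lemma lin_y:
  assumes "y \<in> I" "b \<in> lin x s (ideal_pow I k)"
  shows "y * b \<in> lin x s (ideal_pow I (Suc k))"
proof -
  obtain g where g: "\<forall>i<s. g i \<in> ideal_pow I k" "b = (\<Sum>i<s. x i * g i)" using lin_E[OF assms(2)] by blast
  have "y * b = (\<Sum>i<s. x i * (y * g i))" by (simp add: g sum_distrib_left mult.left_commute)
  moreover have "(\<Sum>i<s. x i * (y * g i)) \<in> lin x s (ideal_pow I (Suc k))"
    by (rule lin_mem) (simp add: g(1) assms(1) mult_mem)
  ultimately show ?thesis by simp
qed

lemma shift_ideal: assumes L: "r_ideal L" shows "r_ideal {a * t + b | a b. b \<in> L}"
proof -
  have "0 \<in> {a * t + b | a b. b \<in> L}" using id_zero[OF L] by (metis (mono_tags, lifting) add_0 mem_Collect_eq mult_zero_left)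
  moreover have "p + q \<in> {a * t + b | a b. b \<in> L}" if P: "p \<in> {a * t + b | a b. b \<in> L}" and Q: "q \<in> {a * t + b | a b. b \<in> L}" for p q
  proof -
    obtain a b where ab: "p = a * t + b" "b \<in> L" using P by blast
    obtain a' b' where ab': "q = a' * t + b'" "b' \<in> L" using Q by blast
    have "p + q = (a + a') * t + (b + b')" by (simp add: ab ab' algebra_simps)
    moreover have "b + b' \<in> L" using id_add[OF L ab(2) ab'(2)] .
    ultimately show ?thesis by blast
  qed
  moreover have "r * p \<in> {a * t + b | a b. b \<in> L}" if P: "p \<in> {a * t + b | a b. b \<in> L}" for p r
  proof -
    obtain a b where ab: "p = a * t + b" "b \<in> L" using P by blast
    have "r * p = (r * a) * t + r * b" by (simp add: ab algebra_simps)
    moreover have "r * b \<in> L" using id_multL[OF L ab(2)] .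
    ultimately show ?thesis by blast
  qed
  ultimately show ?thesis unfolding r_ideal_def by blast
qed

lemma decomp:
  fixes x :: "nat \<Rightarrow> 'a::comm_ring_1"
  assumes HI: "\<forall>p\<in>I. \<exists>r c. p = (\<Sum>i<s. x i * r i) + y * c" and yI: "y \<in> I"
  shows "e \<in> ideal_pow I (Suc k) \<Longrightarrow> \<exists>a b. b \<in> lin x s (ideal_pow I k) \<and> e = a * y ^ Suc k + b"
proof (induction k arbitrary: e)
  case 0
  let ?T = "{a * y ^ Suc 0 + b | a b. b \<in> lin x s (ideal_pow I 0)}"
  have T: "r_ideal ?T" by (rule shift_ideal[OF lin_ideal[OF pow_ideal]])
  have "{p * q | p q. p \<in> I \<and> q \<in> ideal_pow I 0} \<subseteq> ?T"
  proof
    fix e assume "e \<in> {p * q | p q. p \<in> I \<and> q \<in> ideal_pow I 0}"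
    then obtain p q where pq: "e = p * q" "p \<in> I" by blast
    obtain r c where rc: "p = (\<Sum>i<s. x i * r i) + y * c" using HI pq(2) by blast
    have "e = (c * q) * y ^ Suc 0 + (\<Sum>i<s. x i * (r i * q))"
      by (simp add: pq rc algebra_simps sum_distrib_right sum_distrib_left)
    moreover have "(\<Sum>i<s. x i * (r i * q)) \<in> lin x s (ideal_pow I 0)" by (rule lin_mem) simp
    ultimately show "e \<in> ?T" by blast
  qed
  hence "ideal_pow I (Suc 0) \<subseteq> ?T" using span_least[OF T] by (simp add: ideal_mult_def)
  thus ?case using 0 by blast
next
  case (Suc k)
  let ?T = "{a * y ^ Suc (Suc k) + b | a b. b \<in> lin x s (ideal_pow I (Suc k))}"
  have T: "r_ideal ?T" by (rule shift_ideal[OF lin_ideal[OF pow_ideal]])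
  have "{p * q | p q. p \<in> I \<and> q \<in> ideal_pow I (Suc k)} \<subseteq> ?T"
  proof
    fix e assume "e \<in> {p * q | p q. p \<in> I \<and> q \<in> ideal_pow I (Suc k)}"
    then obtain p q where pq: "e = p * q" "p \<in> I" "q \<in> ideal_pow I (Suc k)" by blast
    obtain r c where rc: "p = (\<Sum>i<s. x i * r i) + y * c" using HI pq(2) by blast
    obtain a' b' where ab': "b' \<in> lin x s (ideal_pow I k)" "q = a' * y ^ Suc k + b'" using Suc.IH[OF pq(3)] by blast
    have "e = (c * a') * y ^ Suc (Suc k) + ((\<Sum>i<s. x i * (r i * q)) + c * (y * b'))"
    proof -
      have e1: "e = (\<Sum>i<s. x i * (r i * q)) + c * (y * q)"
        by (simp add: pq rc algebra_simps sum_distrib_left sum_distrib_right)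
      have e2: "c * (y * q) = (c * a') * y ^ Suc (Suc k) + c * (y * b')" by (simp add: ab'(2) algebra_simps)
      show ?thesis using e1 e2 by (simp add: algebra_simps)
    qed
    moreover have "(\<Sum>i<s. x i * (r i * q)) \<in> lin x s (ideal_pow I (Suc k))"
      by (rule lin_mem) (rule id_multL[OF pow_ideal pq(3)])
    moreover have "c * (y * b') \<in> lin x s (ideal_pow I (Suc k))"
      by (rule id_multL[OF lin_ideal[OF pow_ideal] lin_y[OF yI ab'(1)]])
    ultimately show "e \<in> ?T" using id_add[OF lin_ideal[OF pow_ideal]] by blast
  qed
  hence "ideal_pow I (Suc (Suc k)) \<subseteq> ?T" using span_least[OF T] by (simp add: ideal_mult_def)
  thus ?case using Suc.prems by blast
qed


theorem lemma3p1:
  fixes x :: "nat \<Rightarrow> 'a::comm_ring_1" and y :: 'a and I J :: "'a set"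
    and s n :: nat and z :: "nat \<Rightarrow> 'a"
  assumes noeth: "noetherian_ring TYPE('a)"
    and loc: "local_ring TYPE('a)"
    and idl: "r_ideal I"
    and zdef: "z = (\<lambda>i. if i < s then x i else y)"
    and mingen: "min_gen_set I z (Suc s)"
    and Jdef: "J = ideal_span (x ` {..<s})"
    and n2: "2 \<le> n"
  shows
   \<comment> \<open>sigma_n is defined on cycles: a representation w_s = a y^{n-1} + b exists,
       and every such a lies in JI^{n-1} : y^n\<close>
   "(\<forall>w \<in> kcyc I z (Suc s) n. \<exists>a. sigma_rep I J y s n w a) \<and>
    (\<forall>w a. w \<in> kcyc I z (Suc s) n \<and> sigma_rep I J y s n w a \<longrightarrow>
        a \<in> colon (ideal_mult J (ideal_pow I (n - 1))) (y ^ n)) \<and>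
   \<comment> \<open>sigma_n is well defined on homology classes (independent of all choices)\<close>
    (\<forall>w w' a a'. w \<in> kcyc I z (Suc s) n \<and> w' \<in> kcyc I z (Suc s) n \<and>
        (\<lambda>i. w i - w' i) \<in> kbd I z (Suc s) n \<and> sigma_rep I J y s n w a \<and> sigma_rep I J y s n w' a' \<longrightarrow>
        a - a' \<in> colon (ideal_mult J (ideal_pow I (n - 2))) (y ^ (n - 1))) \<and>
   \<comment> \<open>sigma_n is surjective\<close>
    (\<forall>c \<in> colon (ideal_mult J (ideal_pow I (n - 1))) (y ^ n).
        \<exists>w \<in> kcyc I z (Suc s) n. \<exists>a. sigma_rep I J y s n w a \<and>
          a - c \<in> colon (ideal_mult J (ideal_pow I (n - 2))) (y ^ (n - 1))) \<and>
   \<comment> \<open>there is an injective R-linear map from H_1(x t)_n / yt H_1(x t)_{n-1} onto ker sigma_n\<close>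
    (\<exists>\<alpha> :: (nat \<Rightarrow> 'a) \<Rightarrow> (nat \<Rightarrow> 'a).
       (\<forall>v \<in> kcyc I x s n. \<alpha> v \<in> kcyc I z (Suc s) n) \<and>
       (\<forall>r v v'. v \<in> kcyc I x s n \<and> v' \<in> kcyc I x s n \<longrightarrow>
          (\<lambda>i. \<alpha> (\<lambda>j. r * v j + v' j) i - (r * \<alpha> v i + \<alpha> v' i)) \<in> kbd I z (Suc s) n) \<and>
       (\<forall>v v'. v \<in> kcyc I x s n \<and> v' \<in> kcyc I x s n \<longrightarrow>
          ((\<exists>b \<in> kbd I x s n. \<exists>u \<in> kcyc I x s (n - 1). (\<lambda>i. v i - v' i) = (\<lambda>i. b i + y * u i))
           \<longleftrightarrow> (\<lambda>i. \<alpha> v i - \<alpha> v' i) \<in> kbd I z (Suc s) n)) \<and>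
       (\<forall>w \<in> kcyc I z (Suc s) n.
          (\<exists>a. sigma_rep I J y s n w a \<and>
               a \<in> colon (ideal_mult J (ideal_pow I (n - 2))) (y ^ (n - 1)))
          \<longleftrightarrow> (\<exists>v \<in> kcyc I x s n. (\<lambda>i. w i - \<alpha> v i) \<in> kbd I z (Suc s) n)))"
proof -
  define k where "k = n - 2"
  have nk: "n = Suc (Suc k)" using n2 unfolding k_def by arith
  define P where "P = ideal_pow I k"
  define Q where "Q = ideal_pow I (Suc k)"
  have Pid: "r_ideal P" unfolding P_def by (rule pow_ideal)
  have Qid: "r_ideal Q" unfolding Q_def by (rule pow_ideal)
  have n1: "n - 1 = Suc k" "n - 2 = k" using nk by auto
  have Ieq: "I = ideal_span (z ` {..<Suc s})" using mingen unfolding min_gen_set_def by simp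
  have IS: "I = lin z (Suc s) UNIV" using Ieq span_fin by simp
  have zI: "z i \<in> I" if "i < Suc s" for i
  proof -
    have "z i \<in> z ` {..<Suc s}" using that by simp
    hence "z i \<in> ideal_span (z ` {..<Suc s})" by (rule subsetD[OF span_sup])
    thus ?thesis using Ieq by simp
  qed
  have yI: "y \<in> I" using zI[of s] zdef by simp
  have yPQ: "y * h \<in> Q" if "h \<in> P" for h using that unfolding P_def Q_def by (simp add: yI mult_mem)
  have JP: "ideal_mult J (ideal_pow I (n - 2)) = lin x s P" unfolding n1 Jdef P_def by (rule mult_span[OF pow_ideal])
  have JQ: "ideal_mult J (ideal_pow I (n - 1)) = lin x s Q" unfolding n1 Jdef Q_def by (rule mult_span[OF pow_ideal])
  have linP: "r_ideal (lin x s P)" by (rule lin_ideal[OF Pid])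
  have linQ: "r_ideal (lin x s Q)" by (rule lin_ideal[OF Qid])
  have HI: "\<forall>p\<in>I. \<exists>r c. p = (\<Sum>i<s. x i * r i) + y * c"
  proof
    fix p assume "p \<in> I"
    then obtain g where "p = (\<Sum>i<Suc s. z i * g i)" using IS lin_E by blast
    thus "\<exists>r c. p = (\<Sum>i<s. x i * r i) + y * c" using sumz[OF zdef] by metis
  qed
  have kcz: "w \<in> kcyc I z (Suc s) n \<longleftrightarrow> (\<forall>i<Suc s. w i \<in> Q) \<and> (\<forall>i\<ge>Suc s. w i = 0) \<and> (\<Sum>i<s. x i * w i) + y * w s = 0" for w
    unfolding kcyc_def Q_def using sumz[OF zdef, of w] nk by simp
  have kcx: "v \<in> kcyc I x s n \<longleftrightarrow> (\<forall>i<s. v i \<in> Q) \<and> (\<forall>i\<ge>s. v i = 0) \<and> (\<Sum>i<s. x i * v i) = 0" for v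
    unfolding kcyc_def Q_def using nk by simp
  have kcx1: "v \<in> kcyc I x s (n - 1) \<longleftrightarrow> (\<forall>i<s. v i \<in> P) \<and> (\<forall>i\<ge>s. v i = 0) \<and> (\<Sum>i<s. x i * v i) = 0" for v
    unfolding kcyc_def P_def using nk by simp
  have kbz: "d \<in> kbd I z (Suc s) n \<longleftrightarrow> (\<exists>U. (\<forall>i j. U i j \<in> P) \<and> d = bd z (Suc s) U)" for d
    using kbd_eq[OF n2, of I z "Suc s"] n1 unfolding P_def by auto
  have kbx: "d \<in> kbd I x s n \<longleftrightarrow> (\<exists>U. (\<forall>i j. U i j \<in> P) \<and> d = bd x s U)" for d
    using kbd_eq[OF n2, of I x s] n1 unfolding P_def by auto
  have sr: "sigma_rep I J y s n w a \<longleftrightarrow> (\<exists>b\<in>lin x s P. w s = a * y ^ Suc k + b)" for w a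
    unfolding sigma_rep_def JP unfolding n1 by simp
  have colP: "c \<in> colon (ideal_mult J (ideal_pow I (n - 2))) (y ^ (n - 1)) \<longleftrightarrow> c * y ^ Suc k \<in> lin x s P" for c
    unfolding colon_def JP unfolding n1 by simp
  have colQ: "c \<in> colon (ideal_mult J (ideal_pow I (n - 1))) (y ^ n) \<longleftrightarrow> c * y ^ Suc (Suc k) \<in> lin x s Q" for c
    unfolding colon_def JQ unfolding nk by simp
  have bdzs: "bd z (Suc s) U l = (if l < s then bd x s U l - y * U l s
          else if l = s then (\<Sum>i<s. x i * U i s) else 0)" for U l by (rule bdz[OF zdef])

  have c1: "\<forall>w \<in> kcyc I z (Suc s) n. \<exists>a. sigma_rep I J y s n w a"
  proof
    fix w assume "w \<in> kcyc I z (Suc s) n"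
    hence "w s \<in> ideal_pow I (Suc k)" using kcz Q_def by auto
    then obtain a b where "b \<in> lin x s P" "w s = a * y ^ Suc k + b" using decomp[OF HI yI] P_def by blast
    thus "\<exists>a. sigma_rep I J y s n w a" using sr by blast
  qed
  have c2: "\<forall>w a. w \<in> kcyc I z (Suc s) n \<and> sigma_rep I J y s n w a \<longrightarrow>
        a \<in> colon (ideal_mult J (ideal_pow I (n - 1))) (y ^ n)"
  proof (intro allI impI)
    fix w a assume A: "w \<in> kcyc I z (Suc s) n \<and> sigma_rep I J y s n w a"
    obtain b where b: "b \<in> lin x s P" "w s = a * y ^ Suc k + b" using A sr by blast
    have w: "\<forall>i<Suc s. w i \<in> Q" "(\<Sum>i<s. x i * w i) + y * w s = 0" using A kcz by auto
    have "a * y ^ Suc (Suc k) = (\<Sum>i<s. x i * (- w i)) + (- (y * b))"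
    proof -
      have "a * y ^ Suc (Suc k) = y * w s - y * b" by (simp add: b(2) algebra_simps)
      also have "y * w s = - (\<Sum>i<s. x i * w i)" using w(2) by (simp add: eq_neg_iff_add_eq_0 add.commute)
      finally show ?thesis by (simp add: sum_negf)
    qed
    moreover have "(\<Sum>i<s. x i * (- w i)) \<in> lin x s Q" by (rule lin_mem) (simp add: w(1) id_neg[OF Qid])
    moreover have "- (y * b) \<in> lin x s Q"
    proof -
      have "y * b \<in> lin x s Q" using lin_y[OF yI b(1)[unfolded P_def]] Q_def by simp
      thus ?thesis by (rule id_neg[OF linQ])
    qed
    ultimately have "a * y ^ Suc (Suc k) \<in> lin x s Q" by (metis id_add[OF linQ])
    thus "a \<in> colon (ideal_mult J (ideal_pow I (n - 1))) (y ^ n)" using colQ by simp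
  qed
  have c3: "\<forall>w w' a a'. w \<in> kcyc I z (Suc s) n \<and> w' \<in> kcyc I z (Suc s) n \<and>
        (\<lambda>i. w i - w' i) \<in> kbd I z (Suc s) n \<and> sigma_rep I J y s n w a \<and> sigma_rep I J y s n w' a' \<longrightarrow>
        a - a' \<in> colon (ideal_mult J (ideal_pow I (n - 2))) (y ^ (n - 1))"
  proof (intro allI impI)
    fix w w' a a' assume A: "w \<in> kcyc I z (Suc s) n \<and> w' \<in> kcyc I z (Suc s) n \<and>
        (\<lambda>i. w i - w' i) \<in> kbd I z (Suc s) n \<and> sigma_rep I J y s n w a \<and> sigma_rep I J y s n w' a'"
    obtain b where b: "b \<in> lin x s P" "w s = a * y ^ Suc k + b" using A sr by blast
    obtain b' where b': "b' \<in> lin x s P" "w' s = a' * y ^ Suc k + b'" using A sr by blast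
    obtain U where U: "\<forall>i j. U i j \<in> P" "(\<lambda>i. w i - w' i) = bd z (Suc s) U" using A kbz by blast
    have "w s - w' s = bd z (Suc s) U s" using fun_cong[OF U(2), of s] by simp
    also have "\<dots> = (\<Sum>i<s. x i * U i s)" by (simp add: bdzs)
    finally have ws: "w s - w' s = (\<Sum>i<s. x i * U i s)" .
    have "(\<Sum>i<s. x i * U i s) \<in> lin x s P" by (rule lin_mem) (simp add: U(1))
    hence "w s - w' s \<in> lin x s P" using ws by simp
    hence "(w s - w' s) - b + b' \<in> lin x s P" using id_add[OF linP] id_diff[OF linP] b b' by blast
    moreover have "(w s - w' s) - b + b' = (a - a') * y ^ Suc k" by (simp add: b(2) b'(2) algebra_simps)
    ultimately show "a - a' \<in> colon (ideal_mult J (ideal_pow I (n - 2))) (y ^ (n - 1))" using colP by simp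
  qed
  have c4: "\<forall>c \<in> colon (ideal_mult J (ideal_pow I (n - 1))) (y ^ n).
        \<exists>w \<in> kcyc I z (Suc s) n. \<exists>a. sigma_rep I J y s n w a \<and>
          a - c \<in> colon (ideal_mult J (ideal_pow I (n - 2))) (y ^ (n - 1))"
  proof
    fix c assume "c \<in> colon (ideal_mult J (ideal_pow I (n - 1))) (y ^ n)"
    hence "c * y ^ Suc (Suc k) \<in> lin x s Q" using colQ by simp
    then obtain g where g: "\<forall>i<s. g i \<in> Q" "c * y ^ Suc (Suc k) = (\<Sum>i<s. x i * g i)" using lin_E by blast
    define w where "w = (\<lambda>i. if i < s then - g i else if i = s then c * y ^ Suc k else 0)"
    have yk: "y ^ Suc k \<in> Q" unfolding Q_def by (rule pow_mem[OF yI])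
    have "w \<in> kcyc I z (Suc s) n"
    proof -
      have "\<forall>i<Suc s. w i \<in> Q" using g(1) id_neg[OF Qid] id_multL[OF Qid yk] unfolding w_def by (auto simp: less_Suc_eq)
      moreover have "\<forall>i\<ge>Suc s. w i = 0" unfolding w_def by auto
      moreover have "(\<Sum>i<s. x i * w i) = - (c * y ^ Suc (Suc k))"
        unfolding g(2) by (simp add: w_def sum_negf)
      ultimately show ?thesis using kcz by (simp add: w_def algebra_simps)
    qed
    moreover have "sigma_rep I J y s n w c" using sr id_zero[OF linP] by (auto simp: w_def)
    moreover have "c - c \<in> colon (ideal_mult J (ideal_pow I (n - 2))) (y ^ (n - 1))" using colP id_zero[OF linP] by simp
    ultimately show "\<exists>w \<in> kcyc I z (Suc s) n. \<exists>a. sigma_rep I J y s n w a \<and>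
          a - c \<in> colon (ideal_mult J (ideal_pow I (n - 2))) (y ^ (n - 1))" by blast
  qed
  have c5: "\<exists>\<alpha> :: (nat \<Rightarrow> 'a) \<Rightarrow> (nat \<Rightarrow> 'a).
       (\<forall>v \<in> kcyc I x s n. \<alpha> v \<in> kcyc I z (Suc s) n) \<and>
       (\<forall>r v v'. v \<in> kcyc I x s n \<and> v' \<in> kcyc I x s n \<longrightarrow>
          (\<lambda>i. \<alpha> (\<lambda>j. r * v j + v' j) i - (r * \<alpha> v i + \<alpha> v' i)) \<in> kbd I z (Suc s) n) \<and>
       (\<forall>v v'. v \<in> kcyc I x s n \<and> v' \<in> kcyc I x s n \<longrightarrow>
          ((\<exists>b \<in> kbd I x s n. \<exists>u \<in> kcyc I x s (n - 1). (\<lambda>i. v i - v' i) = (\<lambda>i. b i + y * u i))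
           \<longleftrightarrow> (\<lambda>i. \<alpha> v i - \<alpha> v' i) \<in> kbd I z (Suc s) n)) \<and>
       (\<forall>w \<in> kcyc I z (Suc s) n.
          (\<exists>a. sigma_rep I J y s n w a \<and>
               a \<in> colon (ideal_mult J (ideal_pow I (n - 2))) (y ^ (n - 1)))
          \<longleftrightarrow> (\<exists>v \<in> kcyc I x s n. (\<lambda>i. w i - \<alpha> v i) \<in> kbd I z (Suc s) n))"
  proof (intro exI[of _ "\<lambda>v. v"] conjI)
    show "\<forall>v \<in> kcyc I x s n. v \<in> kcyc I z (Suc s) n"
    proof
      fix v assume "v \<in> kcyc I x s n"
      hence v: "\<forall>i<s. v i \<in> Q" "\<forall>i\<ge>s. v i = 0" "(\<Sum>i<s. x i * v i) = 0" using kcx by auto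
      have "\<forall>i<Suc s. v i \<in> Q" using v(1,2) id_zero[OF Qid] by (auto simp: less_Suc_eq)
      thus "v \<in> kcyc I z (Suc s) n" using v kcz by simp
    qed
    have z0: "(\<lambda>_. 0) \<in> kbd I z (Suc s) n"
      using kbz[of "\<lambda>_. 0"] bd_zero[of z "Suc s"] id_zero[OF Pid] by metis
    show "\<forall>r v v'. v \<in> kcyc I x s n \<and> v' \<in> kcyc I x s n \<longrightarrow>
          (\<lambda>i. (r * v i + v' i) - (r * v i + v' i)) \<in> kbd I z (Suc s) n"
      using z0 by simp
    show "\<forall>v v'. v \<in> kcyc I x s n \<and> v' \<in> kcyc I x s n \<longrightarrow>
          ((\<exists>b \<in> kbd I x s n. \<exists>u \<in> kcyc I x s (n - 1). (\<lambda>i. v i - v' i) = (\<lambda>i. b i + y * u i))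
           \<longleftrightarrow> (\<lambda>i. v i - v' i) \<in> kbd I z (Suc s) n)"
    proof (intro allI impI)
      fix v v' assume A: "v \<in> kcyc I x s n \<and> v' \<in> kcyc I x s n"
      have vz: "\<forall>i\<ge>s. v i = 0" "\<forall>i\<ge>s. v' i = 0" using A kcx by auto
      show "(\<exists>b \<in> kbd I x s n. \<exists>u \<in> kcyc I x s (n - 1). (\<lambda>i. v i - v' i) = (\<lambda>i. b i + y * u i))
           \<longleftrightarrow> (\<lambda>i. v i - v' i) \<in> kbd I z (Suc s) n"
      proof
        assume "\<exists>b \<in> kbd I x s n. \<exists>u \<in> kcyc I x s (n - 1). (\<lambda>i. v i - v' i) = (\<lambda>i. b i + y * u i)"
        then obtain b u where b: "b \<in> kbd I x s n" and u: "u \<in> kcyc I x s (n - 1)"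
          and d: "(\<lambda>i. v i - v' i) = (\<lambda>i. b i + y * u i)" by blast
        obtain ub where ub: "\<forall>i j. ub i j \<in> P" "b = bd x s ub" using b kbx by blast
        have uu: "\<forall>i<s. u i \<in> P" "\<forall>i\<ge>s. u i = 0" "(\<Sum>i<s. x i * u i) = 0" using u kcx1 by auto
        define U where "U = (\<lambda>i j. if j = s then - u i else ub i j)"
        have UP: "\<forall>i j. U i j \<in> P" unfolding U_def using ub(1) uu(1,2) id_neg[OF Pid] id_zero[OF Pid]
          by (metis linorder_not_le neg_equal_0_iff_equal)
        have bxU: "bd x s U = bd x s ub" by (rule bd_cong) (simp add: U_def)
        have "(\<lambda>i. v i - v' i) = bd z (Suc s) U"
        proof (rule ext)
          fix l
          show "v l - v' l = bd z (Suc s) U l"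
          proof (cases "l < s")
            case True
            have "U l s = - u l" by (simp add: U_def)
            thus ?thesis using True fun_cong[OF d, of l] by (simp add: bdzs bxU ub(2))
          next
            case False
            have "bd x s ub l = 0" using False by (simp add: bd_def)
            hence "v l - v' l = 0" using fun_cong[OF d, of l] uu(2) False ub(2) by simp
            moreover have "bd z (Suc s) U l = 0"
              using False uu(3) by (simp add: bdzs U_def sum_negf)
            ultimately show ?thesis by simp
          qed
        qed
        thus "(\<lambda>i. v i - v' i) \<in> kbd I z (Suc s) n" using kbz UP by blast
      next
        assume "(\<lambda>i. v i - v' i) \<in> kbd I z (Suc s) n"
        then obtain U where UP: "\<forall>i j. U i j \<in> P" and d: "(\<lambda>i. v i - v' i) = bd z (Suc s) U" using kbz by blast
        define u where "u = (\<lambda>l. if l < s then - U l s else 0)"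
        have "v s - v' s = bd z (Suc s) U s" using fun_cong[OF d, of s] by simp
        hence sU: "(\<Sum>i<s. x i * U i s) = 0" using vz by (simp add: bdzs)
        have "u \<in> kcyc I x s (n - 1)"
        proof -
          have "\<forall>i<s. u i \<in> P" using UP id_neg[OF Pid] by (simp add: u_def)
          moreover have "\<forall>i\<ge>s. u i = 0" by (simp add: u_def)
          moreover have "(\<Sum>i<s. x i * u i) = 0" using sU by (simp add: u_def sum_negf)
          ultimately show ?thesis using kcx1 by simp
        qed
        moreover have "bd x s U \<in> kbd I x s n" using kbx UP by blast
        moreover have "(\<lambda>i. v i - v' i) = (\<lambda>i. bd x s U i + y * u i)"
        proof (rule ext)
          fix l
          show "v l - v' l = bd x s U l + y * u l"
          proof (cases "l < s")
            case True thus ?thesis using fun_cong[OF d, of l] by (simp add: bdzs u_def)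
          next
            case False thus ?thesis using vz by (simp add: bd_def u_def)
          qed
        qed
        ultimately show "\<exists>b \<in> kbd I x s n. \<exists>u \<in> kcyc I x s (n - 1). (\<lambda>i. v i - v' i) = (\<lambda>i. b i + y * u i)"
          by blast
      qed
    qed
    show "\<forall>w \<in> kcyc I z (Suc s) n.
          (\<exists>a. sigma_rep I J y s n w a \<and>
               a \<in> colon (ideal_mult J (ideal_pow I (n - 2))) (y ^ (n - 1)))
          \<longleftrightarrow> (\<exists>v \<in> kcyc I x s n. (\<lambda>i. w i - v i) \<in> kbd I z (Suc s) n)"
    proof
      fix w assume W: "w \<in> kcyc I z (Suc s) n"
      have w: "\<forall>i<Suc s. w i \<in> Q" "\<forall>i\<ge>Suc s. w i = 0" "(\<Sum>i<s. x i * w i) + y * w s = 0" using W kcz by auto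
      show "(\<exists>a. sigma_rep I J y s n w a \<and>
               a \<in> colon (ideal_mult J (ideal_pow I (n - 2))) (y ^ (n - 1)))
          \<longleftrightarrow> (\<exists>v \<in> kcyc I x s n. (\<lambda>i. w i - v i) \<in> kbd I z (Suc s) n)"
      proof
        assume "\<exists>a. sigma_rep I J y s n w a \<and> a \<in> colon (ideal_mult J (ideal_pow I (n - 2))) (y ^ (n - 1))"
        then obtain a b where b: "b \<in> lin x s P" "w s = a * y ^ Suc k + b" and a: "a * y ^ Suc k \<in> lin x s P"
          using sr colP by blast
        have "w s \<in> lin x s P" using b id_add[OF linP a b(1)] by simp
        then obtain h where h: "\<forall>i<s. h i \<in> P" "w s = (\<Sum>i<s. x i * h i)" using lin_E by blast
        define U where "U = (\<lambda>i j. if j = s \<and> i < s then h i else 0)"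
        define v where "v = (\<lambda>l. if l < s then w l + y * h l else 0)"
        have UP: "\<forall>i j. U i j \<in> P" using h(1) id_zero[OF Pid] by (simp add: U_def)
        have bx0: "bd x s U = (\<lambda>_. 0)" using bd_cong[of s U "\<lambda>_ _. 0" x] bd_zero by (simp add: U_def)
        have "v \<in> kcyc I x s n"
        proof -
          have "\<forall>i<s. v i \<in> Q" using w(1) h(1) yPQ id_add[OF Qid] by (simp add: v_def)
          moreover have "\<forall>i\<ge>s. v i = 0" by (simp add: v_def)
          moreover have "(\<Sum>i<s. x i * v i) = 0"
          proof -
            have "(\<Sum>i<s. x i * v i) = (\<Sum>i<s. x i * w i + y * (x i * h i))"
              by (rule sum.cong) (auto simp: v_def algebra_simps)
            also have "\<dots> = (\<Sum>i<s. x i * w i) + y * w s" by (simp add: h(2) sum.distrib sum_distrib_left)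
            finally show ?thesis using w(3) by simp
          qed
          ultimately show ?thesis using kcx by simp
        qed
        moreover have "(\<lambda>i. w i - v i) = bd z (Suc s) U"
        proof (rule ext)
          fix l
          consider "l < s" | "l = s" | "s < l" by linarith
          thus "w l - v l = bd z (Suc s) U l"
          proof cases
            case 1
            have "U l s = h l" using 1 by (simp add: U_def)
            thus ?thesis using 1 by (simp add: bdzs bx0 v_def)
          next
            case 2
            have "(\<Sum>i<s. x i * U i s) = (\<Sum>i<s. x i * h i)" by (rule sum.cong) (auto simp: U_def)
            thus ?thesis using 2 h(2) by (simp add: bdzs v_def)
          next
            case 3 thus ?thesis using w(2) by (simp add: bdzs v_def)
          qed
        qed
        hence "(\<lambda>i. w i - v i) \<in> kbd I z (Suc s) n" using kbz UP by blast
        ultimately show "\<exists>v \<in> kcyc I x s n. (\<lambda>i. w i - v i) \<in> kbd I z (Suc s) n" by blast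
      next
        assume "\<exists>v \<in> kcyc I x s n. (\<lambda>i. w i - v i) \<in> kbd I z (Suc s) n"
        then obtain v U where v: "v \<in> kcyc I x s n" and UP: "\<forall>i j. U i j \<in> P"
          and d: "(\<lambda>i. w i - v i) = bd z (Suc s) U" using kbz by blast
        have "v s = 0" using v kcx by auto
        hence "w s = (\<Sum>i<s. x i * U i s)" using fun_cong[OF d, of s] by (simp add: bdzs)
        moreover have "(\<Sum>i<s. x i * U i s) \<in> lin x s P" by (rule lin_mem) (simp add: UP)
        ultimately have "sigma_rep I J y s n w 0" using sr by simp
        moreover have "0 \<in> colon (ideal_mult J (ideal_pow I (n - 2))) (y ^ (n - 1))" using colP id_zero[OF linP] by simp
        ultimately show "\<exists>a. sigma_rep I J y s n w a \<and> a \<in> colon (ideal_mult J (ideal_pow I (n - 2))) (y ^ (n - 1))"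
          by blast
      qed
    qed
  qed
  from c1 c2 c3 c4 c5 show ?thesis by (intro conjI)
qed

end
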